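(* Let $A\in\mathbb{R}^{m\times N}$, $q\in(1,\infty]$, and let $x\in\mathbb{R}^N$ be a nonzero $k$-sparse vector such that $$k<\inf_{h\in\ker(A)\setminus\{0\}}3^{\frac{q}{1-q}}s_q(h).$$ Then $x$ is the unique solution of $\min_{z\in\mathbb{R}^N\setminus\{0\}}\lVert z\rVert_1/\lVert z\rVert_q$ subject to $Az=Ax$.
   Context: For nonzero $h\in\mathbb{R}^N$ and $q\in(1,\infty)$, $s_q(h)=\left(\lVert h\rVert_1/\lVert h\rVert_q\right)^{q/(q-1)}$, and $s_\infty(h)=\lVert h\rVert_1/\lVert h\rVert_\infty$; for $q=\infty$ the factor $3^{q/(1-q)}$ is interpreted as $3^{-1}$. $\ker(A)=\{h: Ah=0\}$. A vector is $k$-sparse if it has at most $k$ nonzero entries. *)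

theory Defs
  imports "HOL-Analysis.Analysis"
begin

definition l1_norm :: "real ^ 'n \<Rightarrow> real" where
  "l1_norm h = (\<Sum>i\<in>UNIV. \<bar>h $ i\<bar>)"

definition lq_norm :: "ereal \<Rightarrow> real ^ 'n \<Rightarrow> real" where
  "lq_norm q h = (if q = \<infinity> then Max (range (\<lambda>i. \<bar>h $ i\<bar>))
                  else (\<Sum>i\<in>UNIV. \<bar>h $ i\<bar> powr real_of_ereal q) powr (1 / real_of_ereal q))"

definition s_q :: "ereal \<Rightarrow> real ^ 'n \<Rightarrow> real" where
  "s_q q h = (if q = \<infinity> then l1_norm h / lq_norm q h
              else (l1_norm h / lq_norm q h) powr (real_of_ereal q / (real_of_ereal q - 1)))"

definition three_factor :: "ereal \<Rightarrow> real" where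
  "three_factor q = (if q = \<infinity> then 1 / 3
                     else 3 powr (real_of_ereal q / (1 - real_of_ereal q)))"

definition kernel :: "real ^ 'n ^ 'm \<Rightarrow> (real ^ 'n) set" where
  "kernel A = {h. A *v h = 0}"

definition sparse :: "nat \<Rightarrow> real ^ 'n \<Rightarrow> bool" where
  "sparse k x \<longleftrightarrow> card {i. x $ i \<noteq> 0} \<le> k"

end

theory Submission imports Defs begin

lemma cvx_pt:
  fixes t u v p :: real
  assumes "0 \<le> t" "t \<le> 1" "0 \<le> u" "0 \<le> v" "1 \<le> p"
  shows "(t * u + (1 - t) * v) powr p \<le> t * u powr p + (1 - t) * v powr p"
proof (cases "u > 0 \<and> v > 0")
  case True
  then show ?thesis using convex_onD[OF powr_convex[OF assms(5)], of "1 - t" u v] assms by (simp add: algebra_simps)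
next
  case False
  have aux: "(s * y) powr p \<le> s * y powr p" if "0 \<le> s" "s \<le> 1" "0 \<le> y" for s y :: real
  proof -
    have "(s * y) powr p = s powr p * y powr p" using that by (simp add: powr_mult)
    also have "s powr p \<le> s powr 1" using that assms(5)
      using powr_mono'[of 1 p s] by simp
    hence "s powr p * y powr p \<le> s * y powr p" using that by (simp add: mult_right_mono)
    finally show ?thesis .
  qed
  from False assms consider "u = 0" | "v = 0" by linarith
  then show ?thesis
  proof cases
    case 1 then show ?thesis using aux[of "1 - t" v] assms by simp
  next
    case 2 then show ?thesis using aux[of t u] assms by simp
  qed
qed

lemma powr_sum_zero:
  fixes f :: "'a \<Rightarrow> real"
  assumes "finite I" "\<And>i. i \<in> I \<Longrightarrow> f i \<ge> 0" "p > 0" "(\<Sum>i\<in>I. f i powr p) powr (1/p) = 0"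
  shows "\<And>i. i \<in> I \<Longrightarrow> f i = 0"
proof -
  fix i assume i: "i \<in> I"
  have "(\<Sum>i\<in>I. f i powr p) = 0" using assms(4) by simp
  then have "\<forall>i\<in>I. f i powr p = 0" using assms(1) by (subst (asm) sum_nonneg_eq_0_iff) auto
  then show "f i = 0" using i by simp
qed

lemma minkowski:
  fixes f g :: "'a \<Rightarrow> real"
  assumes fin: "finite I" and f0: "\<And>i. i \<in> I \<Longrightarrow> f i \<ge> 0" and g0: "\<And>i. i \<in> I \<Longrightarrow> g i \<ge> 0"
    and p: "1 \<le> p"
  shows "(\<Sum>i\<in>I. (f i + g i) powr p) powr (1/p) \<le> (\<Sum>i\<in>I. f i powr p) powr (1/p) + (\<Sum>i\<in>I. g i powr p) powr (1/p)"
proof -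
  define F where "F = (\<Sum>i\<in>I. f i powr p) powr (1/p)"
  define G where "G = (\<Sum>i\<in>I. g i powr p) powr (1/p)"
  have F0: "F \<ge> 0" and G0: "G \<ge> 0" by (simp_all add: F_def G_def)
  have FP: "F powr p = (\<Sum>i\<in>I. f i powr p)" unfolding F_def using p
    by (simp add: powr_powr sum_nonneg)
  have GP: "G powr p = (\<Sum>i\<in>I. g i powr p)" unfolding G_def using p
    by (simp add: powr_powr sum_nonneg)
  show ?thesis
  proof (cases "F = 0 \<or> G = 0")
    case True
    then show ?thesis
    proof
      assume "F = 0"
      then have "\<And>i. i \<in> I \<Longrightarrow> f i = 0" using powr_sum_zero[OF fin f0, where p=p] p unfolding F_def by auto
      then show ?thesis by (simp add: F_def G_def)
    next
      assume "G = 0"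
      then have "\<And>i. i \<in> I \<Longrightarrow> g i = 0" using powr_sum_zero[OF fin g0, where p=p] p unfolding G_def by auto
      then show ?thesis by (simp add: F_def G_def)
    qed
  next
    case False
    then have Fp: "F > 0" and Gp: "G > 0" using F0 G0 by auto
    define t where "t = F / (F + G)"
    have t0: "0 \<le> t" "t \<le> 1" using Fp Gp by (auto simp: t_def)
    have pt: "(f i + g i) powr p \<le> (F + G) powr p * (t * (f i / F) powr p + (1 - t) * (g i / G) powr p)"
      if i: "i \<in> I" for i
    proof -
      have t1: "1 - t = G / (F + G)" using Fp Gp by (simp add: t_def field_simps)
      have a1: "t * (f i / F) = f i / (F + G)" using Fp Gp by (simp add: t_def)
      have a2: "(1 - t) * (g i / G) = g i / (F + G)" using Fp Gp unfolding t1 by simp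
      have "f i + g i = (F + G) * (t * (f i / F) + (1 - t) * (g i / G))"
        unfolding a1 a2 using Fp Gp by (simp add: add_divide_distrib[symmetric])
      then have "(f i + g i) powr p = (F + G) powr p * (t * (f i / F) + (1 - t) * (g i / G)) powr p"
        using Fp Gp f0[OF i] g0[OF i] t0 by (simp add: powr_mult)
      also have "\<dots> \<le> (F + G) powr p * (t * (f i / F) powr p + (1 - t) * (g i / G) powr p)"
        using cvx_pt[OF t0, of "f i / F" "g i / G" p] Fp Gp f0[OF i] g0[OF i] p
        by (intro mult_left_mono) auto
      finally show ?thesis .
    qed
    have "(\<Sum>i\<in>I. (f i + g i) powr p) \<le> (\<Sum>i\<in>I. (F + G) powr p * (t * (f i / F) powr p + (1 - t) * (g i / G) powr p))"
      using pt by (rule sum_mono)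
    also have "\<dots> = (F + G) powr p * (t / F powr p * (\<Sum>i\<in>I. f i powr p) + (1 - t) / G powr p * (\<Sum>i\<in>I. g i powr p))"
      using Fp Gp f0 g0
      by (simp add: sum_distrib_left sum.distrib powr_divide algebra_simps sum_divide_distrib)
    also have "\<dots> = (F + G) powr p"
    proof -
      have "F powr p > 0" "G powr p > 0" using Fp Gp by auto
      then show ?thesis by (simp add: FP[symmetric] GP[symmetric])
    qed
    finally have "(\<Sum>i\<in>I. (f i + g i) powr p) \<le> (F + G) powr p" .
    then have "(\<Sum>i\<in>I. (f i + g i) powr p) powr (1/p) \<le> ((F + G) powr p) powr (1/p)"
      using p by (intro powr_mono2) (auto intro: sum_nonneg)
    also have "\<dots> = F + G" using Fp Gp p by (simp add: powr_powr)
    finally show ?thesis by (simp add: F_def G_def)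
  qed
qed

lemma holder1:
  fixes a :: "'a \<Rightarrow> real"
  assumes fin: "finite S" and a0: "\<And>i. i \<in> S \<Longrightarrow> a i \<ge> 0" and p: "p > 1"
  shows "sum a S \<le> real (card S) powr (1 - 1/p) * (\<Sum>i\<in>S. a i powr p) powr (1/p)"
proof -
  define A where "A = (\<Sum>i\<in>S. a i powr p) powr (1/p)"
  have AP: "A powr p = (\<Sum>i\<in>S. a i powr p)" unfolding A_def using p
    by (simp add: powr_powr sum_nonneg)
  show ?thesis
  proof (cases "A = 0 \<or> S = {}")
    case True
    then show ?thesis
    proof
      assume "A = 0"
      then have "\<And>i. i \<in> S \<Longrightarrow> a i = 0" using powr_sum_zero[OF fin a0, where p=p] p unfolding A_def by auto
      then show ?thesis by (simp add: sum_nonneg)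
    qed simp
  next
    case False
    then have Ap: "A > 0" and Sne: "S \<noteq> {}" by (auto simp: A_def)
    define n where "n = real (card S)"
    have np: "n > 0" using Sne fin by (simp add: n_def card_gt_0_iff)
    define p' where "p' = p / (p - 1)"
    have p'1: "p' > 1" using p by (simp add: p'_def)
    have conj: "1/p + 1/p' = 1" using p by (simp add: p'_def field_simps)
    define b where "b = n powr (-(1 - 1/p))"
    have bp: "b > 0" using np by (simp add: b_def)
    have ex: "-(1 - 1/p) * p' = -1" using p by (simp add: p'_def field_simps)
    have bP: "b powr p' = 1 / n" using np p
      unfolding b_def powr_powr ex by (simp add: powr_minus divide_inverse)
    have y: "(a i / A) * b \<le> (a i / A) powr p / p + 1 / n / p'" if i: "i \<in> S" for i
      using Youngs_inequality[OF p p'1 conj, of "a i / A" b] a0[OF i] Ap bp bP by simp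
    have "(\<Sum>i\<in>S. (a i / A) * b) \<le> (\<Sum>i\<in>S. (a i / A) powr p / p + 1 / n / p')"
      using y by (rule sum_mono)
    also have "\<dots> = (\<Sum>i\<in>S. a i powr p) / A powr p / p + 1 / p'"
      using np Ap a0 by (simp add: sum.distrib powr_divide sum_divide_distrib n_def)
    also have "\<dots> = 1" using Ap AP conj
      by (smt (verit) AP divide_self_if powr_gt_zero)
    finally have "(\<Sum>i\<in>S. a i) * b / A \<le> 1" by (simp add: sum_divide_distrib sum_distrib_right)
    then have "sum a S \<le> A / b" using Ap bp by (simp add: field_simps)
    moreover have "b * n powr (1 - 1/p) = 1" using np unfolding b_def powr_add[symmetric] by simp
    then have "A / b = n powr (1 - 1/p) * A" using bp by (simp add: field_simps)
    ultimately show ?thesis by (simp add: A_def n_def)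
  qed
qed

lemma main_abstract:
  fixes A :: "real^'n^'m" and x :: "real^'n" and N :: "real^'n \<Rightarrow> real" and c :: real
  assumes Npos: "\<And>w. w \<noteq> 0 \<Longrightarrow> N w > 0"
  and Ntri: "\<And>a b. N (a + b) \<le> N a + N b"
  and Nsupp: "\<And>h. (\<Sum>i\<in>{i. x$i \<noteq> 0}. \<bar>h$i\<bar>) \<le> c * N h"
  and nsp: "\<And>h. h \<in> kernel A - {0} \<Longrightarrow> l1_norm h > 3 * c * N h"
  and x_nz: "x \<noteq> 0"
  shows "{z. z \<noteq> 0 \<and> A *v z = A *v x \<and> (\<forall>w. w \<noteq> 0 \<and> A *v w = A *v x \<longrightarrow> l1_norm z / N z \<le> l1_norm w / N w)} = {x}"
proof -
  define S where "S = {i. x$i \<noteq> 0}"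
  have strict: "l1_norm x / N x < l1_norm w / N w" if w: "w \<noteq> 0" "A *v w = A *v x" "w \<noteq> x" for w
  proof -
    define h where "h = w - x"
    have wh: "w = x + h" by (simp add: h_def)
    have hk: "h \<in> kernel A - {0}" using w
      by (simp add: kernel_def h_def matrix_vector_mult_diff_distrib)
    have hnz: "h \<noteq> 0" using hk by simp
    have pt: "\<bar>x$i + h$i\<bar> \<ge> \<bar>x$i\<bar> + \<bar>h$i\<bar> - 2 * (if i \<in> S then \<bar>h$i\<bar> else 0)" for i
      by (cases "i \<in> S") (auto simp: S_def)
    have e1: "(\<Sum>i\<in>UNIV. if i \<in> S then \<bar>h$i\<bar> else 0) = (\<Sum>i\<in>S. \<bar>h$i\<bar>)"
      using sum.inter_restrict[of UNIV "\<lambda>i. \<bar>h$i\<bar>" S] by simp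
    have "l1_norm x + l1_norm h - 2 * (\<Sum>i\<in>S. \<bar>h$i\<bar>) = (\<Sum>i\<in>UNIV. \<bar>x$i\<bar> + \<bar>h$i\<bar> - 2 * (if i \<in> S then \<bar>h$i\<bar> else 0))"
      by (simp add: l1_norm_def sum.distrib sum_subtractf sum_distrib_left e1[symmetric])
    also have "\<dots> \<le> l1_norm w"
      unfolding l1_norm_def wh by (rule sum_mono) (use pt in simp)
finally have Lw: "l1_norm w \<ge> l1_norm x + l1_norm h - 2 * (\<Sum>i\<in>S. \<bar>h$i\<bar>)" .
    have Lx0: "l1_norm x = (\<Sum>i\<in>S. \<bar>x$i\<bar>)"
      unfolding l1_norm_def using sum.inter_restrict[of UNIV "\<lambda>i. \<bar>x$i\<bar>" S]
      by (simp add: S_def) (intro sum.cong, auto)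
    have Lx: "l1_norm x \<le> c * N x" using Lx0 Nsupp[of x] by (simp add: S_def)
    have s: "(\<Sum>i\<in>S. \<bar>h$i\<bar>) \<le> c * N h" using Nsupp[of h] by (simp add: S_def)
    have Lh: "l1_norm h > 3 * c * N h" using nsp hk by blast
    have Nw: "N w \<le> N x + N h" using Ntri wh by simp
    have Nx: "N x > 0" using Npos x_nz by blast
    have Nwp: "N w > 0" using Npos w by blast
    have Nh: "N h > 0" using Npos hnz by blast
    have Lxn: "l1_norm x \<ge> 0" unfolding l1_norm_def by (simp add: sum_nonneg)
    have Lwbig: "l1_norm w > l1_norm x + c * N h" using Lw s Lh by linarith
    have "l1_norm x * N w \<le> l1_norm x * (N x + N h)" using Nw Lxn by (simp add: mult_left_mono)
    also have "\<dots> = l1_norm x * N x + l1_norm x * N h" by (simp add: algebra_simps)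
    also have "\<dots> \<le> l1_norm x * N x + c * N x * N h" using Lx Nh by (simp add: mult_right_mono)
    also have "\<dots> = (l1_norm x + c * N h) * N x" by (simp add: algebra_simps)
    also have "\<dots> < l1_norm w * N x" using Lwbig Nx by (simp add: mult_strict_right_mono)
    finally have "l1_norm x * N w < l1_norm w * N x" .
    then show ?thesis using Nx Nwp by (simp add: divide_simps)
  qed
  show ?thesis
  proof (intro equalityI subsetI)
    fix z assume "z \<in> {z. z \<noteq> 0 \<and> A *v z = A *v x \<and> (\<forall>w. w \<noteq> 0 \<and> A *v w = A *v x \<longrightarrow> l1_norm z / N z \<le> l1_norm w / N w)}"
    then have z: "z \<noteq> 0" "A *v z = A *v x" "l1_norm z / N z \<le> l1_norm x / N x" using x_nz by auto
    show "z \<in> {x}"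
    proof (rule ccontr)
      assume "z \<notin> {x}"
      then show False using strict[of z] z by simp
    qed
  next
    fix z assume "z \<in> {x}"
    then show "z \<in> {z. z \<noteq> 0 \<and> A *v z = A *v x \<and> (\<forall>w. w \<noteq> 0 \<and> A *v w = A *v x \<longrightarrow> l1_norm z / N z \<le> l1_norm w / N w)}"
      using x_nz strict by (auto simp: order_le_less)
  qed
qed

theorem proposition3:
  fixes A :: "real ^ 'n ^ 'm" and q :: ereal and x :: "real ^ 'n" and k :: nat
  assumes q: "1 < q"
    and x_nz: "x \<noteq> 0"
    and x_sparse: "sparse k x"
    and hk: "ereal (real k) < (INF h \<in> kernel A - {0}. ereal (three_factor q * s_q q h))"
  shows "{z. z \<noteq> 0 \<and> A *v z = A *v x \<and>
             (\<forall>w. w \<noteq> 0 \<and> A *v w = A *v x \<longrightarrow>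
                  l1_norm z / lq_norm q z \<le> l1_norm w / lq_norm q w)} = {x}"
proof -
  define S where "S = {i. x$i \<noteq> 0}"
  have cardS: "card S \<le> k" using x_sparse by (simp add: sparse_def S_def)
  have hk': "real k < three_factor q * s_q q h" if "h \<in> kernel A - {0}" for h
  proof -
    have "(INF h \<in> kernel A - {0}. ereal (three_factor q * s_q q h)) \<le> ereal (three_factor q * s_q q h)"
      using that by (rule INF_lower)
    then have "ereal (real k) < ereal (three_factor q * s_q q h)" by (rule less_le_trans[OF hk])
    then show ?thesis by simp
  qed
  have l1nn: "l1_norm h \<ge> 0" for h :: "real^'n" unfolding l1_norm_def by (simp add: sum_nonneg)
  have nz_ex: "\<exists>i. w$i \<noteq> 0" if "w \<noteq> 0" for w :: "real^'n"
    using that by (simp add: vec_eq_iff)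
  show ?thesis
  proof (cases "q = \<infinity>")
    case True
    define N where "N = (\<lambda>h::real^'n. Max (range (\<lambda>i. \<bar>h $ i\<bar>)))"
    have Nq: "lq_norm q = N" using True by (simp add: fun_eq_iff lq_norm_def N_def)
    have Nge: "\<bar>h$i\<bar> \<le> N h" for h i unfolding N_def by (rule Max_ge) auto
    have Npos: "N w > 0" if "w \<noteq> 0" for w
      using nz_ex[OF that] Nge[of w] by (metis zero_less_abs_iff less_le_trans)
    have Ntri: "N (a + b) \<le> N a + N b" for a b
    proof -
      have e: "N (a + b) = Max (range (\<lambda>i. \<bar>(a + b) $ i\<bar>))" by (simp add: N_def)
      have "Max (range (\<lambda>i. \<bar>(a + b) $ i\<bar>)) \<le> N a + N b" using Nge[of a] Nge[of b]
        by (subst Max_le_iff) (auto intro: order_trans[OF abs_triangle_ineq] add_mono)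
      then show ?thesis using e by simp
    qed
    have Nsupp: "(\<Sum>i\<in>{i. x$i \<noteq> 0}. \<bar>h$i\<bar>) \<le> real k * N h" for h
    proof -
      have "(\<Sum>i\<in>S. \<bar>h$i\<bar>) \<le> (\<Sum>i\<in>S. N h)" by (rule sum_mono) (rule Nge)
      also have "\<dots> = real (card S) * N h" by simp
      also have "\<dots> \<le> real k * N h" using cardS order_trans[OF abs_ge_zero Nge[of h]]
        by (intro mult_right_mono) auto
      finally show ?thesis by (simp add: S_def)
    qed
    have nsp: "l1_norm h > 3 * real k * N h" if "h \<in> kernel A - {0}" for h
    proof -
      have "real k < 1/3 * (l1_norm h / N h)" using hk'[OF that] True
        by (simp add: three_factor_def s_q_def Nq[unfolded True])
      moreover have "N h > 0" using Npos that by auto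
      ultimately show ?thesis by (simp add: field_simps)
    qed
    show ?thesis unfolding Nq
      by (rule main_abstract[OF Npos Ntri Nsupp nsp x_nz])
  next
    case False
    then obtain p where qp: "q = ereal p" and p: "p > 1" using q
      by (cases q) auto
    define N where "N = (\<lambda>h::real^'n. (\<Sum>i\<in>UNIV. \<bar>h $ i\<bar> powr p) powr (1 / p))"
    have Nq: "lq_norm q = N" using qp by (simp add: fun_eq_iff lq_norm_def N_def)
    have Npos: "N w > 0" if wnz: "w \<noteq> 0" for w
    proof -
      obtain i where i: "w$i \<noteq> 0" using nz_ex[OF wnz] by blast
      have "0 < \<bar>w$i\<bar> powr p" using i by simp
      also have "\<dots> \<le> (\<Sum>i\<in>UNIV. \<bar>w $ i\<bar> powr p)" by (rule member_le_sum) auto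
      finally show ?thesis unfolding N_def by simp
    qed
    have Ntri: "N (a + b) \<le> N a + N b" for a b
    proof -
      have "(\<Sum>i\<in>UNIV. \<bar>(a+b) $ i\<bar> powr p) \<le> (\<Sum>i\<in>UNIV. (\<bar>a $ i\<bar> + \<bar>b $ i\<bar>) powr p)"
        using p by (intro sum_mono powr_mono2) (auto simp: abs_triangle_ineq)
      then have "N (a + b) \<le> (\<Sum>i\<in>UNIV. (\<bar>a $ i\<bar> + \<bar>b $ i\<bar>) powr p) powr (1/p)"
        unfolding N_def using p by (intro powr_mono2) (auto intro: sum_nonneg)
      also have "\<dots> \<le> N a + N b" unfolding N_def
        by (rule minkowski) (use p in auto)
      finally show ?thesis .
    qed
    define c where "c = real k powr (1 - 1/p)"
    have Nsupp: "(\<Sum>i\<in>{i. x$i \<noteq> 0}. \<bar>h$i\<bar>) \<le> c * N h" for h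
    proof -
      have "(\<Sum>i\<in>S. \<bar>h$i\<bar>) \<le> real (card S) powr (1 - 1/p) * (\<Sum>i\<in>S. \<bar>h$i\<bar> powr p) powr (1/p)"
        by (rule holder1) (use p in auto)
      also have "\<dots> \<le> c * N h" unfolding c_def N_def using p cardS
        by (intro mult_mono powr_mono2 sum_mono2) (auto intro: sum_nonneg)
      finally show ?thesis by (simp add: S_def)
    qed
    have nsp: "l1_norm h > 3 * c * N h" if h: "h \<in> kernel A - {0}" for h
    proof -
      define R where "R = l1_norm h / N h"
      define e where "e = p / (p - 1)"
      have ep: "e > 0" using p by (simp add: e_def)
      have Nh: "N h > 0" using Npos h by auto
      have R0: "R \<ge> 0" using Nh l1nn[of h] by (simp add: R_def)
      have "real k < 3 powr (p / (1 - p)) * R powr e" using hk'[OF h] qp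
        by (simp add: three_factor_def s_q_def Nq[unfolded qp] R_def e_def)
      also have "3 powr (p / (1 - p)) = 1 / 3 powr e" using p
        by (simp add: e_def powr_minus_divide[symmetric] minus_divide_right)
      finally have "real k < (R / 3) powr e" using R0 by (simp add: powr_divide)
      then have "real k powr (1/e) < ((R / 3) powr e) powr (1/e)"
        using ep by (intro powr_less_mono2) auto
      also have "\<dots> = R / 3" using ep R0 by (simp add: powr_powr)
      also have "1/e = 1 - 1/p" using p by (simp add: e_def field_simps)
      finally have "c < R / 3" by (simp add: c_def)
      then show ?thesis using Nh by (simp add: R_def field_simps)
    qed
    show ?thesis unfolding Nq
      by (rule main_abstract[OF Npos Ntri Nsupp nsp x_nz])
  qed
qed

end
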